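(* Let $\varepsilon,\delta,\kappa>0$ (with $\delta,\kappa$ possibly depending on $\varepsilon$) and let $(v_\varepsilon,\varphi_\varepsilon)$ be a minimizer of $G_{\varepsilon,\delta,\kappa}$ in $\mathcal I$ with $v_\varepsilon\ge0$. Then for $\varepsilon>0$ small enough there exists $C>0$, independent of the parameters, such that $$\|1-v_\varepsilon\|_{L^\infty((0,1))}\le C\kappa\sqrt\varepsilon.$$
   Context: For $\varepsilon,\delta,\kappa>0$ and suitable $(v,\varphi)$ on $(0,1)$ let $$G_{\varepsilon,\delta,\kappa}(v,\varphi)=\frac12\int_0^1v'^2+\frac{1}{4\varepsilon^2}\int_0^1(1-v^2)^2+\frac18\int_0^1v^2\varphi'^2+\frac{\delta}{8\varepsilon^2}\int_0^1v^4\sin^2\varphi-\frac\kappa2\int_0^1v^2\varphi'.$$ Let $\mathcal S(v)=\{x\in[0,1]:v(x)=0\}$. The admissible class $\mathcal I$ consists of pairs $(v,\varphi)$ with $v\in H^1((0,1))$, $\varphi$ of class $H^1$ on $(0,1)\setminus\mathcal S(v)$, $\varphi(0)=0$ and $\int_0^1v^2=1$; on $\mathcal S(v)$ the quantities $v^2\varphi'^2$, $v^2\varphi'$ and $v^4\sin^2\varphi$ are set equal to $0$. *)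

theory Defs
  imports "HOL-Analysis.Analysis"
begin

text \<open>H^1((0,1)) in one dimension: v is the (continuous) representative
  v(x) = v(0) + int_0^x dv with dv in L^2(0,1); dv is the weak derivative v'.\<close>
definition H1_01 :: "(real \<Rightarrow> real) \<Rightarrow> (real \<Rightarrow> real) \<Rightarrow> bool" where
  "H1_01 v dv \<longleftrightarrow>
     set_integrable lborel {0..1} dv \<and>
     set_integrable lborel {0..1} (\<lambda>x. (dv x)\<^sup>2) \<and>
     (\<forall>x\<in>{0..1}. v x = v 0 + (LINT t:{0..x}|lborel. dv t))"

definition zero_set :: "(real \<Rightarrow> real) \<Rightarrow> real set" where
  "zero_set v = {x \<in> {0..1}. v x = 0}"

definition nonzero_set :: "(real \<Rightarrow> real) \<Rightarrow> real set" where
  "nonzero_set v = {0..1} - zero_set v"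

definition H1_on :: "real set \<Rightarrow> (real \<Rightarrow> real) \<Rightarrow> (real \<Rightarrow> real) \<Rightarrow> bool" where
  "H1_on U phi dphi \<longleftrightarrow>
     set_integrable lborel U phi \<and>
     set_integrable lborel U (\<lambda>x. (phi x)\<^sup>2) \<and>
     set_integrable lborel U dphi \<and>
     set_integrable lborel U (\<lambda>x. (dphi x)\<^sup>2) \<and>
     (\<forall>a b. a \<le> b \<and> {a..b} \<subseteq> U \<longrightarrow>
        (\<forall>x\<in>{a..b}. phi x = phi a + (LINT t:{a..x}|lborel. dphi t)))"

text \<open>Admissible class I (pairs given together with their weak derivatives).\<close>
definition admissible ::
  "(real \<Rightarrow> real) \<Rightarrow> (real \<Rightarrow> real) \<Rightarrow> (real \<Rightarrow> real) \<Rightarrow> (real \<Rightarrow> real) \<Rightarrow> bool" where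
  "admissible v dv phi dphi \<longleftrightarrow>
     H1_01 v dv \<and> H1_on (nonzero_set v) phi dphi \<and> phi 0 = 0 \<and>
     (LINT x:{0..1}|lborel. (v x)\<^sup>2) = 1"

definition G :: "real \<Rightarrow> real \<Rightarrow> real \<Rightarrow>
    (real \<Rightarrow> real) \<Rightarrow> (real \<Rightarrow> real) \<Rightarrow> (real \<Rightarrow> real) \<Rightarrow> (real \<Rightarrow> real) \<Rightarrow> real" where
  "G \<epsilon> \<delta> \<kappa> v dv phi dphi =
     1/2 * (LINT x:{0..1}|lborel. (dv x)\<^sup>2)
   + 1/(4*\<epsilon>\<^sup>2) * (LINT x:{0..1}|lborel. (1 - (v x)\<^sup>2)\<^sup>2)
   + 1/8 * (LINT x:nonzero_set v|lborel. (v x)\<^sup>2 * (dphi x)\<^sup>2)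
   + \<delta>/(8*\<epsilon>\<^sup>2) * (LINT x:nonzero_set v|lborel. (v x)^4 * (sin (phi x))\<^sup>2)
   - \<kappa>/2 * (LINT x:nonzero_set v|lborel. (v x)\<^sup>2 * dphi x)"

definition is_minimizer ::
  "real \<Rightarrow> real \<Rightarrow> real \<Rightarrow>
    (real \<Rightarrow> real) \<Rightarrow> (real \<Rightarrow> real) \<Rightarrow> (real \<Rightarrow> real) \<Rightarrow> (real \<Rightarrow> real) \<Rightarrow> bool" where
  "is_minimizer \<epsilon> \<delta> \<kappa> v dv phi dphi \<longleftrightarrow>
     admissible v dv phi dphi \<and>
     (\<forall>w dw psi dpsi. admissible w dw psi dpsi \<longrightarrow>
        G \<epsilon> \<delta> \<kappa> v dv phi dphi \<le> G \<epsilon> \<delta> \<kappa> w dw psi dpsi)"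

end

theory Submission
  imports Defs
begin

lemma H1_facts:
  fixes v dv :: "real \<Rightarrow> real"
  assumes "H1_01 v dv"
  shows "dv integrable_on {0..1}" "(\<lambda>x. (dv x)\<^sup>2) integrable_on {0..1}"
    "\<And>x::real. x \<in> {0..1} \<Longrightarrow> v x = v 0 + integral {0..x} dv"
    "continuous_on {0..1} v"
proof -
  have i1: "set_integrable lborel {0..1} dv" and i2: "set_integrable lborel {0..1} (\<lambda>x. (dv x)\<^sup>2)"
    and rep: "\<forall>x\<in>{0..1}. v x = v 0 + (LINT t:{0..x}|lborel. dv t)"
    using assms unfolding H1_01_def by blast+
  show di: "dv integrable_on {0..1}" using set_borel_integral_eq_integral(1)[OF i1] .
  show "(\<lambda>x. (dv x)\<^sup>2) integrable_on {0..1}" using set_borel_integral_eq_integral(1)[OF i2] .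
  have eq: "v x = v 0 + integral {0..x} dv" if x: "x \<in> {0..1}" for x
  proof -
    have "set_integrable lborel {0..x} dv"
      by (rule set_integrable_subset[OF i1]) (use x in auto)
    then show ?thesis using rep x set_borel_integral_eq_integral(2) by metis
  qed
  then show "\<And>x::real. x \<in> {0..1} \<Longrightarrow> v x = v 0 + integral {0..x} dv" .
  have "continuous_on {0..1} (\<lambda>x. v 0 + integral {0..x} dv)"
    by (intro continuous_intros indefinite_integral_continuous_1 di)
  then show "continuous_on {0..1} v"
  proof (rule continuous_on_eq)
    fix x :: real assume "x \<in> {0..1}"
    then show "v 0 + integral {0..x} dv = v x" using eq[of x] by simp
  qed
qed

lemma H1_diff:
  assumes "H1_01 v dv" "0 \<le> s" "s \<le> t" "t \<le> 1"
  shows "v t - v s = integral {s..t} dv"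
proof -
  have di: "dv integrable_on {0..t}"
    by (rule integrable_on_subinterval[OF H1_facts(1)[OF assms(1)]]) (use assms in auto)
  have "integral {0..t} dv = integral {0..s} dv + integral {s..t} dv"
    using Henstock_Kurzweil_Integration.integral_combine[OF assms(2,3) di] by simp
  moreover have "v t = v 0 + integral {0..t} dv" "v s = v 0 + integral {0..s} dv"
    using H1_facts(3)[OF assms(1), of t] H1_facts(3)[OF assms(1), of s] assms by simp_all
  ultimately show ?thesis by simp
qed

lemma H1_osc:
  assumes "H1_01 v dv" "0 \<le> s" "s \<le> t" "t \<le> 1" "lam > 0"
  shows "\<bar>v t - v s\<bar> \<le> lam * (t - s) / 2 + integral {0..1} (\<lambda>x. (dv x)\<^sup>2) / (2 * lam)"
proof -
  have sub: "{s..t} \<subseteq> {0..1}" using assms by auto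
  have di: "dv integrable_on {s..t}"
    by (rule integrable_on_subinterval[OF H1_facts(1)[OF assms(1)] sub])
  have d2: "(\<lambda>x. (dv x)\<^sup>2) integrable_on {s..t}"
    by (rule integrable_on_subinterval[OF H1_facts(2)[OF assms(1)] sub])
  have gi: "(\<lambda>x. lam / 2 + (1 / (2 * lam)) *\<^sub>R (dv x)\<^sup>2) integrable_on {s..t}"
    by (intro integrable_add integrable_cmul d2 integrable_const_ivl)
  have pt: "norm (dv x) \<le> lam / 2 + (1 / (2 * lam)) *\<^sub>R (dv x)\<^sup>2" for x
  proof -
    have "0 \<le> (lam - \<bar>dv x\<bar>)\<^sup>2" by simp
    then have "2 * lam * \<bar>dv x\<bar> \<le> lam\<^sup>2 + (dv x)\<^sup>2" by (simp add: power2_eq_square algebra_simps)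
    then show ?thesis using assms(5) by (simp add: field_simps power2_eq_square)
  qed
  have "\<bar>v t - v s\<bar> = norm (integral {s..t} dv)" using H1_diff[OF assms(1-4)] by simp
  also have "\<dots> \<le> integral {s..t} (\<lambda>x. lam / 2 + (1 / (2 * lam)) *\<^sub>R (dv x)\<^sup>2)"
    by (rule integral_norm_bound_integral[OF di gi pt])
  also have "\<dots> = integral {s..t} (\<lambda>x. lam / 2) + integral {s..t} (\<lambda>x. (1 / (2 * lam)) *\<^sub>R (dv x)\<^sup>2)"
    by (rule integral_add) (intro integrable_cmul d2 integrable_const_ivl)+
  also have "\<dots> = lam * (t - s) / 2 + integral {s..t} (\<lambda>x. (dv x)\<^sup>2) / (2 * lam)"
    using assms(3) by (simp add: content_real)
  finally have A: "\<bar>v t - v s\<bar> \<le> lam * (t - s) / 2 + integral {s..t} (\<lambda>x. (dv x)\<^sup>2) / (2 * lam)" .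
  have "integral {s..t} (\<lambda>x. (dv x)\<^sup>2) \<le> integral {0..1} (\<lambda>x. (dv x)\<^sup>2)"
    by (rule integral_subset_le[OF sub d2 H1_facts(2)[OF assms(1)]]) simp
  then have "integral {s..t} (\<lambda>x. (dv x)\<^sup>2) / (2 * lam) \<le> integral {0..1} (\<lambda>x. (dv x)\<^sup>2) / (2 * lam)"
    using assms(5) by (simp add: divide_right_mono)
  with A show ?thesis by linarith
qed

lemma comp_adm: "admissible (\<lambda>_. 1) (\<lambda>_. 0) (\<lambda>_. 0) (\<lambda>_. 0)"
proof -
  have "(LINT (x::real):{0..1}|lborel. ((\<lambda>_. 1::real) x)\<^sup>2) = 1"
    using set_borel_integral_eq_integral(2)[OF borel_integrable_atLeastAtMost'[of 0 1 "\<lambda>x. 1::real"]]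
    by simp
  then show ?thesis
    unfolding admissible_def H1_01_def H1_on_def by (simp add: set_integrable_def)
qed

lemma comp_G: "G \<epsilon> \<delta> \<kappa> (\<lambda>_. 1) (\<lambda>_. 0) (\<lambda>_. 0) (\<lambda>_. 0) = 0"
  unfolding G_def by simp

lemma nonneg_LINT:
  fixes f :: "real \<Rightarrow> real"
  assumes "\<And>x. x \<in> A \<Longrightarrow> 0 \<le> f x"
  shows "0 \<le> (LINT x:A|lborel. f x)"
  unfolding set_lebesgue_integral_def
  by (rule integral_nonneg_AE) (use assms in \<open>auto simp: indicator_def\<close>)

lemma quad_bound:
  fixes a d k :: real
  shows "- (k\<^sup>2 / 2) * a\<^sup>2 \<le> 1/8 * (a\<^sup>2 * d\<^sup>2) - k/2 * (a\<^sup>2 * d)"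
proof -
  have "1/8 * (a\<^sup>2 * d\<^sup>2) - k/2 * (a\<^sup>2 * d) - (- (k\<^sup>2 / 2) * a\<^sup>2) = a\<^sup>2 * (d - 2 * k)\<^sup>2 / 8"
    by (simp add: power2_eq_square algebra_simps)
  moreover have "0 \<le> a\<^sup>2 * (d - 2 * k)\<^sup>2 / 8" by simp
  ultimately show ?thesis by linarith
qed

lemma energy:
  assumes adm: "admissible v dv phi dphi" and eps: "0 < \<epsilon>" and del: "0 < \<delta>"
    and kap: "0 < \<kappa>" and G0: "G \<epsilon> \<delta> \<kappa> v dv phi dphi \<le> 0"
  shows "integral {0..1} (\<lambda>x. (dv x)\<^sup>2) \<le> \<kappa>\<^sup>2"
    "(LINT x:{0..1}|lborel. (1 - (v x)\<^sup>2)\<^sup>2) \<le> 2 * \<epsilon>\<^sup>2 * \<kappa>\<^sup>2"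
proof -
  define U where "U = nonzero_set v"
  have H1: "H1_01 v dv" and H1on: "H1_on U phi dphi"
    and norm1: "(LINT x:{0..1}|lborel. (v x)\<^sup>2) = 1"
    using adm unfolding admissible_def U_def by auto
  have i2: "set_integrable lborel {0..1} (\<lambda>x. (dv x)\<^sup>2)" using H1 unfolding H1_01_def by blast
  have Dq: "(LINT x:{0..1}|lborel. (dv x)\<^sup>2) = integral {0..1} (\<lambda>x. (dv x)\<^sup>2)"
    using set_borel_integral_eq_integral(2)[OF i2] .
  have cont: "continuous_on {0..1} v" using H1_facts(4)[OF H1] .
  have cont2: "continuous_on {0..1} (\<lambda>x. (v x)\<^sup>2)" by (intro continuous_intros cont)
  have "bounded (v ` {0..1})"
    by (intro compact_imp_bounded compact_continuous_image cont) simp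
  then obtain B where B: "B > 0" "\<And>x. x \<in> {0..1} \<Longrightarrow> \<bar>v x\<bar> \<le> B"
    unfolding bounded_pos by auto
  have B2: "(v x)\<^sup>2 \<le> B\<^sup>2" if "x \<in> {0..1}" for x
  proof -
    have "\<bar>v x\<bar>\<^sup>2 \<le> B\<^sup>2" by (rule power_mono) (use B(2)[OF that] in auto)
    then show ?thesis by simp
  qed
  have Usub: "U \<subseteq> {0..1}" unfolding U_def nonzero_set_def by auto
  have measV: "(\<lambda>x. indicator {0..1} x *\<^sub>R (v x)\<^sup>2) \<in> borel_measurable lborel"
    using borel_measurable_continuous_on_indicator[OF _ cont2] by simp
  have iV: "integrable lborel (\<lambda>x. indicator {0..1} x *\<^sub>R (v x)\<^sup>2)"
    using borel_integrable_atLeastAtMost'[OF cont2] unfolding set_integrable_def .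
  have id1: "integrable lborel (\<lambda>x. indicator U x *\<^sub>R dphi x)"
    and id2: "integrable lborel (\<lambda>x. indicator U x *\<^sub>R (dphi x)\<^sup>2)"
    using H1on unfolding H1_on_def set_integrable_def by blast+
  have eqA: "(\<lambda>x. indicator U x *\<^sub>R ((v x)\<^sup>2 * (dphi x)\<^sup>2)) =
      (\<lambda>x. (indicator {0..1} x *\<^sub>R (v x)\<^sup>2) * (indicator U x *\<^sub>R (dphi x)\<^sup>2))"
  proof (rule ext)
    fix x show "indicator U x *\<^sub>R ((v x)\<^sup>2 * (dphi x)\<^sup>2) = (indicator {0..1} x *\<^sub>R (v x)\<^sup>2) * (indicator U x *\<^sub>R (dphi x)\<^sup>2)"
      using Usub by (cases "x \<in> U") (auto simp: indicator_def)
  qed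
  have eqB: "(\<lambda>x. indicator U x *\<^sub>R ((v x)\<^sup>2 * dphi x)) =
      (\<lambda>x. (indicator {0..1} x *\<^sub>R (v x)\<^sup>2) * (indicator U x *\<^sub>R dphi x))"
  proof (rule ext)
    fix x show "indicator U x *\<^sub>R ((v x)\<^sup>2 * dphi x) = (indicator {0..1} x *\<^sub>R (v x)\<^sup>2) * (indicator U x *\<^sub>R dphi x)"
      using Usub by (cases "x \<in> U") (auto simp: indicator_def)
  qed
  have iA: "integrable lborel (\<lambda>x. indicator U x *\<^sub>R ((v x)\<^sup>2 * (dphi x)\<^sup>2))"
  proof (rule Bochner_Integration.integrable_bound[OF Bochner_Integration.integrable_mult_right[OF id2, of "B\<^sup>2"]])
    show "(\<lambda>x. indicator U x *\<^sub>R ((v x)\<^sup>2 * (dphi x)\<^sup>2)) \<in> borel_measurable lborel"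
      unfolding eqA using measV borel_measurable_integrable[OF id2] by measurable
    show "AE x in lborel. norm (indicator U x *\<^sub>R ((v x)\<^sup>2 * (dphi x)\<^sup>2))
        \<le> norm (B\<^sup>2 * (indicator U x *\<^sub>R (dphi x)\<^sup>2))"
    proof (rule AE_I2)
      fix x show "norm (indicator U x *\<^sub>R ((v x)\<^sup>2 * (dphi x)\<^sup>2))
        \<le> norm (B\<^sup>2 * (indicator U x *\<^sub>R (dphi x)\<^sup>2))"
      proof (cases "x \<in> U")
        case True
        then have "(v x)\<^sup>2 \<le> B\<^sup>2" using B2 Usub by auto
        then show ?thesis using True by (simp add: abs_mult mult_right_mono)
      qed simp
    qed
  qed
  have iB: "integrable lborel (\<lambda>x. indicator U x *\<^sub>R ((v x)\<^sup>2 * dphi x))"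
  proof (rule Bochner_Integration.integrable_bound[OF Bochner_Integration.integrable_mult_right[OF id1, of "B\<^sup>2"]])
    show "(\<lambda>x. indicator U x *\<^sub>R ((v x)\<^sup>2 * dphi x)) \<in> borel_measurable lborel"
      unfolding eqB using measV borel_measurable_integrable[OF id1] by measurable
    show "AE x in lborel. norm (indicator U x *\<^sub>R ((v x)\<^sup>2 * dphi x))
        \<le> norm (B\<^sup>2 * (indicator U x *\<^sub>R dphi x))"
    proof (rule AE_I2)
      fix x show "norm (indicator U x *\<^sub>R ((v x)\<^sup>2 * dphi x))
        \<le> norm (B\<^sup>2 * (indicator U x *\<^sub>R dphi x))"
      proof (cases "x \<in> U")
        case True
        then have "(v x)\<^sup>2 \<le> B\<^sup>2" using B2 Usub by auto
        then show ?thesis using True by (simp add: abs_mult mult_right_mono)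
      qed simp
    qed
  qed
  define A where "A = (LINT x:U|lborel. (v x)\<^sup>2 * (dphi x)\<^sup>2)"
  define Bt where "Bt = (LINT x:U|lborel. (v x)\<^sup>2 * dphi x)"
  define S where "S = (LINT x:U|lborel. (v x)^4 * (sin (phi x))\<^sup>2)"
  define D where "D = (LINT x:{0..1}|lborel. (dv x)\<^sup>2)"
  define W where "W = (LINT x:{0..1}|lborel. (1 - (v x)\<^sup>2)\<^sup>2)"
  have phipart: "1/8 * A - \<kappa>/2 * Bt \<ge> - (\<kappa>\<^sup>2 / 2)"
  proof -
    define fA where "fA = (\<lambda>x. indicator U x *\<^sub>R ((v x)\<^sup>2 * (dphi x)\<^sup>2))"
    define fB where "fB = (\<lambda>x. indicator U x *\<^sub>R ((v x)\<^sup>2 * dphi x))"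
    define fV where "fV = (\<lambda>x. indicator {0..1} x *\<^sub>R (v x)\<^sup>2)"
    have iA': "integrable lborel fA" using iA unfolding fA_def .
    have iB': "integrable lborel fB" using iB unfolding fB_def .
    have iV': "integrable lborel fV" using iV unfolding fV_def .
    have Aeq: "A = integral\<^sup>L lborel fA" unfolding A_def fA_def set_lebesgue_integral_def ..
    have Beq: "Bt = integral\<^sup>L lborel fB" unfolding Bt_def fB_def set_lebesgue_integral_def ..
    have Veq: "integral\<^sup>L lborel fV = 1" using norm1 unfolding fV_def set_lebesgue_integral_def .
    have "integral\<^sup>L lborel (\<lambda>x. 1/8 * fA x - \<kappa>/2 * fB x) =
        integral\<^sup>L lborel (\<lambda>x. 1/8 * fA x) - integral\<^sup>L lborel (\<lambda>x. \<kappa>/2 * fB x)"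
      by (rule Bochner_Integration.integral_diff) (intro Bochner_Integration.integrable_mult_right iA' iB')+
    also have "\<dots> = 1/8 * A - \<kappa>/2 * Bt"
      unfolding Aeq Beq integral_mult_right_zero ..
    finally have eq1: "integral\<^sup>L lborel (\<lambda>x. 1/8 * fA x - \<kappa>/2 * fB x) = 1/8 * A - \<kappa>/2 * Bt" .
    have "integral\<^sup>L lborel (\<lambda>x. - (\<kappa>\<^sup>2 / 2) * fV x) \<le> integral\<^sup>L lborel (\<lambda>x. 1/8 * fA x - \<kappa>/2 * fB x)"
    proof (rule integral_mono)
      show "integrable lborel (\<lambda>x. - (\<kappa>\<^sup>2 / 2) * fV x)"
        by (intro Bochner_Integration.integrable_mult_right iV')
      show "integrable lborel (\<lambda>x. 1/8 * fA x - \<kappa>/2 * fB x)"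
        by (intro Bochner_Integration.integrable_diff Bochner_Integration.integrable_mult_right iA' iB')
      fix x
      show "- (\<kappa>\<^sup>2 / 2) * fV x \<le> 1/8 * fA x - \<kappa>/2 * fB x"
      proof (cases "x \<in> U")
        case True
        then have x01: "x \<in> {0..1}" using Usub by auto
        have "- (\<kappa>\<^sup>2 / 2) * (v x)\<^sup>2 \<le> 1/8 * ((v x)\<^sup>2 * (dphi x)\<^sup>2) - \<kappa>/2 * ((v x)\<^sup>2 * dphi x)"
          by (rule quad_bound)
        moreover have "fV x = (v x)\<^sup>2" "fA x = (v x)\<^sup>2 * (dphi x)\<^sup>2" "fB x = (v x)\<^sup>2 * dphi x"
          using True x01 unfolding fA_def fB_def fV_def by simp_all
        ultimately show ?thesis by simp
      next
        case False
        then have "fA x = 0" "fB x = 0" "0 \<le> fV x" unfolding fA_def fB_def fV_def by simp_all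
        then show ?thesis by simp
      qed
    qed
    moreover have "integral\<^sup>L lborel (\<lambda>x. - (\<kappa>\<^sup>2 / 2) * fV x) = - (\<kappa>\<^sup>2 / 2)"
      unfolding integral_mult_right_zero Veq by simp
    ultimately show ?thesis using eq1 by linarith
  qed
  have S0: "0 \<le> S" unfolding S_def by (rule nonneg_LINT) simp
  have D0: "0 \<le> D" unfolding D_def by (rule nonneg_LINT) simp
  have W0: "0 \<le> W" unfolding W_def by (rule nonneg_LINT) simp
  have GG: "G \<epsilon> \<delta> \<kappa> v dv phi dphi = 1/2 * D + 1/(4*\<epsilon>\<^sup>2) * W + 1/8 * A + \<delta>/(8*\<epsilon>\<^sup>2) * S - \<kappa>/2 * Bt"
    unfolding G_def A_def Bt_def S_def D_def W_def U_def ..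
  have dS: "0 \<le> \<delta>/(8*\<epsilon>\<^sup>2) * S" using S0 del by simp
  have W0': "0 \<le> 1/(4*\<epsilon>\<^sup>2) * W" using W0 by simp
  have main: "1/2 * D + 1/(4*\<epsilon>\<^sup>2) * W \<le> \<kappa>\<^sup>2 / 2"
    using G0 GG phipart dS by linarith
  then show "integral {0..1} (\<lambda>x. (dv x)\<^sup>2) \<le> \<kappa>\<^sup>2"
    using W0' Dq unfolding D_def by linarith
  have "1/(4*\<epsilon>\<^sup>2) * W \<le> \<kappa>\<^sup>2 / 2" using main D0 by linarith
  then have "W \<le> \<kappa>\<^sup>2 / 2 * (4*\<epsilon>\<^sup>2)" using eps by (simp add: field_simps)
  then show "(LINT x:{0..1}|lborel. (1 - (v x)\<^sup>2)\<^sup>2) \<le> 2 * \<epsilon>\<^sup>2 * \<kappa>\<^sup>2"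
    unfolding W_def by simp
qed

lemma absfact:
  fixes a b c :: real
  shows "\<bar>b\<bar> \<le> \<bar>a\<bar> / 2 \<Longrightarrow> \<bar>a\<bar> \<le> \<bar>c\<bar> + \<bar>b\<bar> \<Longrightarrow> \<bar>a\<bar> / 2 \<le> \<bar>c\<bar>"
  by linarith

lemma main_bound:
  fixes v dv phi dphi :: "real \<Rightarrow> real" and \<epsilon> \<delta> \<kappa> x0 :: real
  assumes eps: "0 < \<epsilon>" "\<epsilon> < 1/2" and del: "0 < \<delta>" and kap: "0 < \<kappa>"
    and mini: "is_minimizer \<epsilon> \<delta> \<kappa> v dv phi dphi"
    and nonneg: "\<forall>x\<in>{0..1}. 0 \<le> v x" and x0: "x0 \<in> {0..1::real}"
  shows "\<bar>1 - v x0\<bar> \<le> 3 * \<kappa> * sqrt \<epsilon>"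
proof (rule ccontr)
  define m where "m = \<bar>1 - v x0\<bar>"
  assume "\<not> \<bar>1 - v x0\<bar> \<le> 3 * \<kappa> * sqrt \<epsilon>"
  then have mbig: "3 * \<kappa> * sqrt \<epsilon> < m" unfolding m_def by simp
  have sq: "sqrt \<epsilon> > 0" "(sqrt \<epsilon>)\<^sup>2 = \<epsilon>" using eps by auto
  have mpos: "m > 0" using mbig kap sq by (smt (verit) mult_pos_pos)
  have adm: "admissible v dv phi dphi" using mini unfolding is_minimizer_def by blast
  have "G \<epsilon> \<delta> \<kappa> v dv phi dphi \<le> G \<epsilon> \<delta> \<kappa> (\<lambda>_. 1) (\<lambda>_. 0) (\<lambda>_. 0) (\<lambda>_. 0)"
    using mini comp_adm unfolding is_minimizer_def by blast
  then have G0: "G \<epsilon> \<delta> \<kappa> v dv phi dphi \<le> 0" using comp_G by simp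
  have Dbd: "integral {0..1} (\<lambda>x. (dv x)\<^sup>2) \<le> \<kappa>\<^sup>2"
    and Wbd: "(LINT x:{0..1}|lborel. (1 - (v x)\<^sup>2)\<^sup>2) \<le> 2 * \<epsilon>\<^sup>2 * \<kappa>\<^sup>2"
    using energy[OF adm eps(1) del kap G0] by auto
  have H1: "H1_01 v dv" using adm unfolding admissible_def by blast
  have cont: "continuous_on {0..1} v" using H1_facts(4)[OF H1] .
  define l where "l = min (1/2) (m\<^sup>2 / (4 * \<kappa>\<^sup>2))"
  have lpos: "l > 0" unfolding l_def using mpos kap by simp
  have lle: "l \<le> 1/2" "l \<le> m\<^sup>2 / (4 * \<kappa>\<^sup>2)" unfolding l_def by auto
  obtain a b where ab: "0 \<le> a" "b \<le> 1" "b - a = l" "a \<le> x0" "x0 \<le> b"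
  proof (cases "x0 \<le> 1/2")
    case True
    show ?thesis by (rule that[of x0 "x0 + l"]) (use True x0 lle lpos in auto)
  next
    case False
    show ?thesis by (rule that[of "x0 - l" x0]) (use False x0 lle lpos in auto)
  qed
  define lam where "lam = m / (2 * l)"
  have lampos: "lam > 0" unfolding lam_def using mpos lpos by simp
  have close: "\<bar>v t - v x0\<bar> \<le> m / 2" if t: "t \<in> {a..b}" for t
  proof -
    have "\<bar>v t - v x0\<bar> \<le> lam * l / 2 + \<kappa>\<^sup>2 / (2 * lam)"
    proof (cases "t \<le> x0")
      case True
      have "\<bar>v x0 - v t\<bar> \<le> lam * (x0 - t) / 2 + integral {0..1} (\<lambda>x. (dv x)\<^sup>2) / (2 * lam)"
        by (rule H1_osc[OF H1 _ True _ lampos]) (use t ab x0 in auto)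
      moreover have "lam * (x0 - t) / 2 \<le> lam * l / 2" using t ab lampos True by simp
      moreover have "integral {0..1} (\<lambda>x. (dv x)\<^sup>2) / (2 * lam) \<le> \<kappa>\<^sup>2 / (2 * lam)"
        using Dbd lampos by (simp add: divide_right_mono)
      ultimately show ?thesis by (simp add: abs_minus_commute)
    next
      case False
      then have F: "x0 \<le> t" by simp
      have "\<bar>v t - v x0\<bar> \<le> lam * (t - x0) / 2 + integral {0..1} (\<lambda>x. (dv x)\<^sup>2) / (2 * lam)"
        by (rule H1_osc[OF H1 _ F _ lampos]) (use t ab x0 in auto)
      moreover have "lam * (t - x0) / 2 \<le> lam * l / 2" using t ab lampos F by simp
      moreover have "integral {0..1} (\<lambda>x. (dv x)\<^sup>2) / (2 * lam) \<le> \<kappa>\<^sup>2 / (2 * lam)"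
        using Dbd lampos by (simp add: divide_right_mono)
      ultimately show ?thesis by simp
    qed
    also have "lam * l / 2 = m / 4" unfolding lam_def using lpos by simp
    also have "\<kappa>\<^sup>2 / (2 * lam) = \<kappa>\<^sup>2 * l / m" unfolding lam_def using lpos mpos by (simp add: field_simps)
    also have "\<kappa>\<^sup>2 * l / m \<le> m / 4"
    proof -
      have "\<kappa>\<^sup>2 * l \<le> \<kappa>\<^sup>2 * (m\<^sup>2 / (4 * \<kappa>\<^sup>2))" by (rule mult_left_mono[OF lle(2)]) simp
      also have "\<dots> = m\<^sup>2 / 4" using kap by simp
      finally have "\<kappa>\<^sup>2 * l \<le> m\<^sup>2 / 4" .
      then show ?thesis using mpos by (simp add: field_simps power2_eq_square)
    qed
    finally show ?thesis by simp
  qed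
  define g where "g = (\<lambda>x. (1 - (v x)\<^sup>2)\<^sup>2)"
  have gcont: "continuous_on {0..1} g" unfolding g_def by (intro continuous_intros cont)
  have gi: "set_integrable lborel {0..1} g" using borel_integrable_atLeastAtMost'[OF gcont] .
  have W: "(LINT x:{0..1}|lborel. (1 - (v x)\<^sup>2)\<^sup>2) = integral {0..1} g"
    using set_borel_integral_eq_integral(2)[OF gi] unfolding g_def .
  have gi01: "g integrable_on {0..1}" using set_borel_integral_eq_integral(1)[OF gi] .
  have sub: "{a..b} \<subseteq> {0..1}" using ab by auto
  have giab: "g integrable_on {a..b}" by (rule integrable_on_subinterval[OF gi01 sub])
  have glow: "m\<^sup>2 / 4 \<le> g t" if t: "t \<in> {a..b}" for t
  proof -
    have t01: "t \<in> {0..1}" using t sub by auto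
    have vt: "0 \<le> v t" using nonneg t01 by auto
    have tri: "\<bar>1 - v x0\<bar> \<le> \<bar>1 - v t\<bar> + \<bar>v t - v x0\<bar>"
      using abs_triangle_ineq[of "1 - v t" "v t - v x0"] by simp
    have "m / 2 \<le> \<bar>1 - v t\<bar>" unfolding m_def by (rule absfact[OF close[OF t, unfolded m_def] tri])
    also have "\<bar>1 - v t\<bar> \<le> \<bar>1 - (v t)\<^sup>2\<bar>"
    proof -
      have f: "1 - (v t)\<^sup>2 = (1 - v t) * (1 + v t)" by (simp add: power2_eq_square algebra_simps)
      have "\<bar>1 - (v t)\<^sup>2\<bar> = \<bar>1 - v t\<bar> * (1 + v t)" unfolding f abs_mult using vt by simp
      moreover have "\<bar>1 - v t\<bar> * 1 \<le> \<bar>1 - v t\<bar> * (1 + v t)"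
        by (rule mult_left_mono) (use vt in auto)
      ultimately show "\<bar>1 - v t\<bar> \<le> \<bar>1 - (v t)\<^sup>2\<bar>" by simp
    qed
    finally have "m / 2 \<le> \<bar>1 - (v t)\<^sup>2\<bar>" .
    then have "(m / 2)\<^sup>2 \<le> \<bar>1 - (v t)\<^sup>2\<bar>\<^sup>2" by (rule power_mono) (use mpos in simp)
    then show ?thesis unfolding g_def by (simp add: power_divide)
  qed
  have "integral {a..b} (\<lambda>x. m\<^sup>2 / 4) \<le> integral {a..b} g"
    by (rule integral_le[OF integrable_const_ivl giab]) (use glow in auto)
  moreover have "integral {a..b} (\<lambda>x. m\<^sup>2 / 4) = l * (m\<^sup>2 / 4)" using ab by (simp add: content_real)
  moreover have "integral {a..b} g \<le> integral {0..1} g"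
    by (rule integral_subset_le[OF sub giab gi01]) (simp add: g_def)
  ultimately have key: "l * m\<^sup>2 \<le> 8 * \<epsilon>\<^sup>2 * \<kappa>\<^sup>2" using Wbd W by linarith
  have m2: "9 * \<kappa>\<^sup>2 * \<epsilon> < m\<^sup>2"
  proof -
    have "(3 * \<kappa> * sqrt \<epsilon>)\<^sup>2 < m\<^sup>2"
      by (rule power_strict_mono[OF mbig]) (use kap sq in auto)
    then show ?thesis using sq by (simp add: power_mult_distrib)
  qed
  show False
  proof (cases "1/2 \<le> m\<^sup>2 / (4 * \<kappa>\<^sup>2)")
    case True
    then have "l = 1/2" unfolding l_def by simp
    then have "l * m\<^sup>2 = m\<^sup>2 / 2" by simp
    then have "m\<^sup>2 \<le> 16 * \<epsilon>\<^sup>2 * \<kappa>\<^sup>2" using key by linarith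
    then have "9 * \<kappa>\<^sup>2 * \<epsilon> < 16 * \<epsilon>\<^sup>2 * \<kappa>\<^sup>2" using m2 by linarith
    then have "9 * (\<kappa>\<^sup>2 * \<epsilon>) < (16 * \<epsilon>) * (\<kappa>\<^sup>2 * \<epsilon>)" by (simp add: power2_eq_square algebra_simps)
    then have "9 < 16 * \<epsilon>" using kap eps by (simp add: mult_less_cancel_right)
    then show False using eps by simp
  next
    case False
    then have "l = m\<^sup>2 / (4 * \<kappa>\<^sup>2)" unfolding l_def by simp
    then have "m\<^sup>2 / (4 * \<kappa>\<^sup>2) * m\<^sup>2 \<le> 8 * \<epsilon>\<^sup>2 * \<kappa>\<^sup>2" using key by simp
    then have k2: "m\<^sup>2 * m\<^sup>2 \<le> 32 * (\<epsilon> * \<kappa>\<^sup>2)\<^sup>2" using kap by (simp add: field_simps power2_eq_square)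
    have "(9 * (\<kappa>\<^sup>2 * \<epsilon>)) * (9 * (\<kappa>\<^sup>2 * \<epsilon>)) < m\<^sup>2 * m\<^sup>2"
    proof (rule mult_strict_mono)
      show m2': "9 * (\<kappa>\<^sup>2 * \<epsilon>) < m\<^sup>2" using m2 by (simp add: mult.assoc)
      show "9 * (\<kappa>\<^sup>2 * \<epsilon>) < m\<^sup>2" by (rule m2')
      show "0 < m\<^sup>2" using mpos by simp
      show "0 \<le> 9 * (\<kappa>\<^sup>2 * \<epsilon>)" using eps by simp
    qed
    moreover have "(9 * (\<kappa>\<^sup>2 * \<epsilon>)) * (9 * (\<kappa>\<^sup>2 * \<epsilon>)) = 81 * (\<epsilon> * \<kappa>\<^sup>2)\<^sup>2"
      by (simp add: power2_eq_square algebra_simps)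
    moreover have "0 < (\<epsilon> * \<kappa>\<^sup>2)\<^sup>2" using kap eps by simp
    ultimately show False using k2 by linarith
  qed
qed

theorem proposition16:
  "\<exists>C>0. \<exists>\<epsilon>0>0. \<forall>\<epsilon> \<delta> \<kappa> v dv phi dphi.
     0 < \<epsilon> \<and> \<epsilon> < \<epsilon>0 \<and> 0 < \<delta> \<and> 0 < \<kappa> \<and>
     is_minimizer \<epsilon> \<delta> \<kappa> v dv phi dphi \<and> (\<forall>x\<in>{0..1}. 0 \<le> v x) \<longrightarrow>
     (\<forall>x\<in>{0..1}. \<bar>1 - v x\<bar> \<le> C * \<kappa> * sqrt \<epsilon>)"
proof (rule exI[of _ 3], rule conjI)
  show "(3::real) > 0" by simp
  show "\<exists>\<epsilon>0>0. \<forall>\<epsilon> \<delta> \<kappa> v dv phi dphi.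
     0 < \<epsilon> \<and> \<epsilon> < \<epsilon>0 \<and> 0 < \<delta> \<and> 0 < \<kappa> \<and>
     is_minimizer \<epsilon> \<delta> \<kappa> v dv phi dphi \<and> (\<forall>x\<in>{0..1}. 0 \<le> v x) \<longrightarrow>
     (\<forall>x\<in>{0..1}. \<bar>1 - v x\<bar> \<le> 3 * \<kappa> * sqrt \<epsilon>)"
  proof (rule exI[of _ "1/2"], intro conjI allI impI ballI)
    show "(0::real) < 1/2" by simp
    fix \<epsilon> \<delta> \<kappa> :: real and v dv phi dphi :: "real \<Rightarrow> real" and x :: real
    assume H: "0 < \<epsilon> \<and> \<epsilon> < 1/2 \<and> 0 < \<delta> \<and> 0 < \<kappa> \<and>
     is_minimizer \<epsilon> \<delta> \<kappa> v dv phi dphi \<and> (\<forall>x\<in>{0..1}. 0 \<le> v x)" and x: "x \<in> {0..1}"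
    show "\<bar>1 - v x\<bar> \<le> 3 * \<kappa> * sqrt \<epsilon>"
      using main_bound[of \<epsilon> \<delta> \<kappa> v dv phi dphi x] H x by blast
  qed
qed

end
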